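(* Fix a threshold $R\in(0,1)$ and, when $\Delta_S^B\neq 0$, let $\tilde i=\Delta_O^B/\Delta_S^B$. Then: (i) if $|\Delta_S^B|\le 2\Delta_O^B$, every type $i\in[-1/2,1/2]$ accepts the recommendation; (ii) if $\Delta_S^B<-2\Delta_O^B$, every type $i\ge\tilde i$ accepts the recommendation; (iii) if $\Delta_S^B>2\Delta_O^B$, every type $i\le\tilde i$ accepts the recommendation.
   Context: Setting. Consumer types are $i\in[-1/2,1/2]$, distributed according to a continuous cumulative distribution function $F$ with full support on $[-1/2,1/2]$. A product has a quality vector $(Q_1,Q_2)\in\{0,1\}^2$; a type-$i$ consumer gets payoff $(1/2+i)Q_1+(1/2-i)Q_2$ from it. The versions $(1,1),(1,0),(0,1),(0,0)$ have prior probabilities $q_H,q_1,q_2,q_L$ respectively, all strictly positive and summing to $1$. One product carries a recommendation from a sender whose type is drawn from $F$ independently of the product; given a threshold $R\in(0,1)$, the sender gives a buy recommendation $B$ if her payoff from the product is at least $R$ and a don't-buy recommendation $D$ otherwise. Let $\phi_1(R)=1-F(R-1/2)$, $\phi_2(R)=F(1/2-R)$, $\pi^B=q_H+q_1\phi_1(R)+q_2\phi_2(R)$ and $\pi^D=1-\pi^B$. Posteriors: $p^B_H=q_H/\pi^B$, $p^B_1=q_1\phi_1(R)/\pi^B$, $p^B_2=q_2\phi_2(R)/\pi^B$, $p^B_L=0$; $p^D_H=0$, $p^D_1=q_1(1-\phi_1(R))/\pi^D$, $p^D_2=q_2(1-\phi_2(R))/\pi^D$, $p^D_L=q_L/\pi^D$.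 For $r\in\{B,D\}$ let $U_i^r=p_H^r+(1/2+i)p_1^r+(1/2-i)p_2^r$ and $U_i^0=q_H+(1/2+i)q_1+(1/2-i)q_2$. A receiver of type $i$ accepts the recommendation if $U_i^B\ge U_i^0$ (equivalently, $U_i^0\ge U_i^D$). The objective and subjective effects of $r\in\{B,D\}$ are $\Delta_O^r=p_H^r-q_H+\frac{p_1^r-q_1}{2}+\frac{p_2^r-q_2}{2}$ and $\Delta_S^r=(p_2^r-q_2)-(p_1^r-q_1)$. *)

theory Defs
  imports Complex_Main
begin

definition is_cdf_full_support :: "(real \<Rightarrow> real) \<Rightarrow> bool" where
  "is_cdf_full_support F \<longleftrightarrow> continuous_on UNIV F \<and> mono F \<and>
     (\<forall>x. x \<le> -1/2 \<longrightarrow> F x = 0) \<and> (\<forall>x. x \<ge> 1/2 \<longrightarrow> F x = 1) \<and>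
     strict_mono_on {-1/2..1/2} F"

definition phi1 :: "(real \<Rightarrow> real) \<Rightarrow> real \<Rightarrow> real" where
  "phi1 F R = 1 - F (R - 1/2)"

definition phi2 :: "(real \<Rightarrow> real) \<Rightarrow> real \<Rightarrow> real" where
  "phi2 F R = F (1/2 - R)"

definition piB :: "(real \<Rightarrow> real) \<Rightarrow> real \<Rightarrow> real \<Rightarrow> real \<Rightarrow> real \<Rightarrow> real" where
  "piB F qH q1 q2 R = qH + q1 * phi1 F R + q2 * phi2 F R"

text \<open>Posteriors after a buy recommendation (p^B_L = 0).\<close>
definition pBH :: "(real \<Rightarrow> real) \<Rightarrow> real \<Rightarrow> real \<Rightarrow> real \<Rightarrow> real \<Rightarrow> real" where
  "pBH F qH q1 q2 R = qH / piB F qH q1 q2 R"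
definition pB1 :: "(real \<Rightarrow> real) \<Rightarrow> real \<Rightarrow> real \<Rightarrow> real \<Rightarrow> real \<Rightarrow> real" where
  "pB1 F qH q1 q2 R = q1 * phi1 F R / piB F qH q1 q2 R"
definition pB2 :: "(real \<Rightarrow> real) \<Rightarrow> real \<Rightarrow> real \<Rightarrow> real \<Rightarrow> real \<Rightarrow> real" where
  "pB2 F qH q1 q2 R = q2 * phi2 F R / piB F qH q1 q2 R"

definition UB :: "(real \<Rightarrow> real) \<Rightarrow> real \<Rightarrow> real \<Rightarrow> real \<Rightarrow> real \<Rightarrow> real \<Rightarrow> real" where
  "UB F qH q1 q2 R i = pBH F qH q1 q2 R + (1/2 + i) * pB1 F qH q1 q2 R
                       + (1/2 - i) * pB2 F qH q1 q2 R"

definition U0 :: "real \<Rightarrow> real \<Rightarrow> real \<Rightarrow> real \<Rightarrow> real" where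
  "U0 qH q1 q2 i = qH + (1/2 + i) * q1 + (1/2 - i) * q2"

definition accepts :: "(real \<Rightarrow> real) \<Rightarrow> real \<Rightarrow> real \<Rightarrow> real \<Rightarrow> real \<Rightarrow> real \<Rightarrow> bool" where
  "accepts F qH q1 q2 R i \<longleftrightarrow> UB F qH q1 q2 R i \<ge> U0 qH q1 q2 i"

definition DeltaOB :: "(real \<Rightarrow> real) \<Rightarrow> real \<Rightarrow> real \<Rightarrow> real \<Rightarrow> real \<Rightarrow> real" where
  "DeltaOB F qH q1 q2 R = pBH F qH q1 q2 R - qH + (pB1 F qH q1 q2 R - q1) / 2
                          + (pB2 F qH q1 q2 R - q2) / 2"

definition DeltaSB :: "(real \<Rightarrow> real) \<Rightarrow> real \<Rightarrow> real \<Rightarrow> real \<Rightarrow> real \<Rightarrow> real" where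
  "DeltaSB F qH q1 q2 R = (pB2 F qH q1 q2 R - q2) - (pB1 F qH q1 q2 R - q1)"

end

theory Submission
  imports Defs
begin

lemma F_bounds:
  assumes "is_cdf_full_support F" shows "0 \<le> F x \<and> F x \<le> 1"
proof -
  have m: "mono F" and z: "F (-1) = 0" and o: "F 1 = 1"
    using assms unfolding is_cdf_full_support_def by auto
  show ?thesis
  proof (cases "x \<le> -1")
    case True then show ?thesis using assms unfolding is_cdf_full_support_def by auto
  next
    case False
    then have "F (-1) \<le> F x" using m by (simp add: monoD)
    moreover have "F x \<le> F (max x 1)" using m by (simp add: monoD)
    moreover have "F (max x 1) = 1" using assms unfolding is_cdf_full_support_def by auto
    ultimately show ?thesis using z by auto
  qed
qed

lemma dO_core:
  fixes qH q1 q2 qL x y :: real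
  assumes "qH > 0" "q1 > 0" "q2 > 0" "qL > 0" "qH + q1 + q2 + qL = 1"
    "0 \<le> x" "x \<le> 1" "0 \<le> y" "y \<le> 1"
  shows "0 \<le> (qH + q1*x/2 + q2*y/2) - (qH + q1*x + q2*y) * (qH + q1/2 + q2/2)"
proof -
  define a where "a = qH + q1*x/2 + q2*y/2"
  define c where "c = qH + q1/2 + q2/2"
  have e: "qH + q1*x + q2*y = 2*a - qH" unfolding a_def by simp
  have a0: "0 \<le> a" unfolding a_def using assms by simp
  have "q1 * x \<le> q1" using mult_left_le[of x q1] assms by simp
  moreover have "q2 * y \<le> q2" using mult_left_le[of y q2] assms by simp
  ultimately have ac: "a \<le> c" unfolding a_def c_def by simp
  have "a - (2*a - qH)*c = a*(1-2*c) + qH*c" by (simp add: algebra_simps)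
  also have "\<dots> \<ge> 0"
  proof (cases "1 - 2*c \<ge> 0")
    case True then show ?thesis using a0 assms unfolding c_def by simp
  next
    case False
    then have "a*(1-2*c) \<ge> c*(1-2*c)" using ac by (simp add: mult_right_mono_neg)
    moreover have "1-2*c+qH = qL" unfolding c_def using assms(5) by simp
    moreover have "c*(1-2*c) + qH*c = c*(1-2*c+qH)" by (simp add: algebra_simps)
    ultimately have "a*(1-2*c) \<ge> c*(1-2*c)" "c*(1-2*c) + qH*c = c*qL" by simp_all
    moreover have "c*qL \<ge> 0" unfolding c_def using assms by simp
    ultimately show ?thesis by linarith
  qed
  finally show ?thesis unfolding a_def c_def using e by (simp add: a_def add.assoc)
qed

lemma ident:
  fixes h a b qH q1 q2 i :: real
  shows "h + (1/2+i)*a + (1/2-i)*b - (qH + (1/2+i)*q1 + (1/2-i)*q2)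
    = (h - qH + (a-q1)/2 + (b-q2)/2) - i*((b-q2)-(a-q1))"
  by (simp add: field_simps)

theorem corollary1:
  fixes F :: "real \<Rightarrow> real" and qH q1 q2 qL R :: real
  assumes "is_cdf_full_support F"
    and "qH > 0" and "q1 > 0" and "q2 > 0" and "qL > 0" and "qH + q1 + q2 + qL = 1"
    and "0 < R" and "R < 1"
  defines "dO \<equiv> DeltaOB F qH q1 q2 R" and "dS \<equiv> DeltaSB F qH q1 q2 R"
  shows "(\<bar>dS\<bar> \<le> 2 * dO \<longrightarrow> (\<forall>i\<in>{-1/2..1/2}. accepts F qH q1 q2 R i))
       \<and> (dS \<noteq> 0 \<and> dS < - 2 * dO \<longrightarrow>
            (\<forall>i\<in>{-1/2..1/2}. i \<ge> dO / dS \<longrightarrow> accepts F qH q1 q2 R i))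
       \<and> (dS \<noteq> 0 \<and> dS > 2 * dO \<longrightarrow>
            (\<forall>i\<in>{-1/2..1/2}. i \<le> dO / dS \<longrightarrow> accepts F qH q1 q2 R i))"
proof -
  define x where "x = phi1 F R"
  define y where "y = phi2 F R"
  define p where "p = piB F qH q1 q2 R"
  have x01: "0 \<le> x" "x \<le> 1" unfolding x_def phi1_def using F_bounds[OF assms(1)] by auto
  have y01: "0 \<le> y" "y \<le> 1" unfolding y_def phi2_def using F_bounds[OF assms(1)] by auto
  have pe: "p = qH + q1*x + q2*y" unfolding p_def piB_def x_def y_def by simp
  have ppos: "p > 0" unfolding pe using assms(2-4) x01 y01 by (simp add: add_pos_nonneg)
  have dOe: "dO = qH/p - qH + (q1*x/p - q1)/2 + (q2*y/p - q2)/2"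
    unfolding dO_def DeltaOB_def pBH_def pB1_def pB2_def p_def x_def y_def by simp
  have "dO * p = (qH + q1*x/2 + q2*y/2) - p * (qH + q1/2 + q2/2)"
    unfolding dOe using ppos by (simp add: field_simps)
  also have "\<dots> \<ge> 0" unfolding pe using dO_core[OF assms(2-6) x01 y01] .
  finally have dO0: "dO \<ge> 0" using ppos by (simp add: zero_le_mult_iff)
  have key: "accepts F qH q1 q2 R i \<longleftrightarrow> i * dS \<le> dO" for i
  proof -
    have "UB F qH q1 q2 R i - U0 qH q1 q2 i = dO - i * dS"
      unfolding UB_def U0_def dO_def dS_def DeltaOB_def DeltaSB_def by (rule ident)
    then show ?thesis unfolding accepts_def by linarith
  qed
  have c1: "\<forall>i\<in>{-1/2..1/2}. accepts F qH q1 q2 R i" if h: "\<bar>dS\<bar> \<le> 2 * dO"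
  proof
    fix i :: real assume "i \<in> {-1/2..1/2}"
    then have "\<bar>i\<bar> \<le> 1/2" by auto
    then have "\<bar>i\<bar> * \<bar>dS\<bar> \<le> 1/2 * \<bar>dS\<bar>" by (intro mult_right_mono) auto
    then have "\<bar>i * dS\<bar> \<le> 1/2 * \<bar>dS\<bar>" by (simp add: abs_mult)
    then show "accepts F qH q1 q2 R i" using h key[of i] abs_ge_self[of "i*dS"] abs_ge_self[of dS] by linarith
  qed
  have c2: "\<forall>i\<in>{-1/2..1/2}. i \<ge> dO / dS \<longrightarrow> accepts F qH q1 q2 R i"
    if h: "dS \<noteq> 0 \<and> dS < - 2 * dO"
  proof (intro ballI impI)
    fix i :: real assume "i \<ge> dO / dS"
    moreover have "dS < 0" using h dO0 by linarith
    ultimately show "accepts F qH q1 q2 R i" using key by (simp add: divide_le_eq mult.commute)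
  qed
  have c3: "\<forall>i\<in>{-1/2..1/2}. i \<le> dO / dS \<longrightarrow> accepts F qH q1 q2 R i"
    if h: "dS \<noteq> 0 \<and> dS > 2 * dO"
  proof (intro ballI impI)
    fix i :: real assume "i \<le> dO / dS"
    moreover have "dS > 0" using h dO0 by linarith
    ultimately show "accepts F qH q1 q2 R i" using key by (simp add: le_divide_eq mult.commute)
  qed
  show ?thesis using c1 c2 c3 by blast
qed

end
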